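(* Let $(X,d)$ be a uniformly locally finite extended metric space that is not amenable. Then for all $n\in\mathbb N$ and $R>0$ there exists $S>0$ such that for every finite set $M\subseteq X$ there are points $x_1,\dots,x_{n|M|}$ such that the closed balls $\bar B(x_i,R)$, $i=1,\dots,n|M|$, are pairwise disjoint and all contained in $\bar B(M,S)$.
   Context: An extended metric may take value $\infty$; $\bar B(A,R)=\{x:d(x,A)\le R\}$. Uniformly locally finite: $\sup_{x}|\bar B(x,R)|<\infty$ for all $R>0$. $\partial_RA=\{x\in X:d(x,A)\le R\text{ and }d(x,X\setminus A)\le R\}$. $(X,d)$ is amenable if for every $R,\varepsilon>0$ there is a finite nonempty $F\subseteq X$ with $|\partial_RF|\le\varepsilon|F|$. *)

theory Defs
  imports "HOL-Library.Extended_Real"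
begin

definition ext_metric :: "'a set \<Rightarrow> ('a \<Rightarrow> 'a \<Rightarrow> ereal) \<Rightarrow> bool" where
  "ext_metric X d \<longleftrightarrow>
     (\<forall>x\<in>X. \<forall>y\<in>X. d x y \<ge> 0) \<and>
     (\<forall>x\<in>X. \<forall>y\<in>X. d x y = 0 \<longleftrightarrow> x = y) \<and>
     (\<forall>x\<in>X. \<forall>y\<in>X. d x y = d y x) \<and>
     (\<forall>x\<in>X. \<forall>y\<in>X. \<forall>z\<in>X. d x z \<le> d x y + d y z)"

text \<open>Distance from a point to a set (infimum; \<infinity> for the empty set).\<close>
definition setdist_e :: "('a \<Rightarrow> 'a \<Rightarrow> ereal) \<Rightarrow> 'a \<Rightarrow> 'a set \<Rightarrow> ereal" where
  "setdist_e d x A = (INF a\<in>A. d x a)"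

definition cball_e :: "'a set \<Rightarrow> ('a \<Rightarrow> 'a \<Rightarrow> ereal) \<Rightarrow> 'a \<Rightarrow> real \<Rightarrow> 'a set" where
  "cball_e X d x R = {y\<in>X. d x y \<le> ereal R}"

definition cball_set :: "'a set \<Rightarrow> ('a \<Rightarrow> 'a \<Rightarrow> ereal) \<Rightarrow> 'a set \<Rightarrow> real \<Rightarrow> 'a set" where
  "cball_set X d A R = {y\<in>X. setdist_e d y A \<le> ereal R}"

definition unif_locally_finite :: "'a set \<Rightarrow> ('a \<Rightarrow> 'a \<Rightarrow> ereal) \<Rightarrow> bool" where
  "unif_locally_finite X d \<longleftrightarrow>
     (\<forall>R>0. \<exists>N::nat. \<forall>x\<in>X. finite (cball_e X d x R) \<and> card (cball_e X d x R) \<le> N)"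

definition boundary_e :: "'a set \<Rightarrow> ('a \<Rightarrow> 'a \<Rightarrow> ereal) \<Rightarrow> real \<Rightarrow> 'a set \<Rightarrow> 'a set" where
  "boundary_e X d R A = {x\<in>X. setdist_e d x A \<le> ereal R \<and> setdist_e d x (X - A) \<le> ereal R}"

definition amenable_e :: "'a set \<Rightarrow> ('a \<Rightarrow> 'a \<Rightarrow> ereal) \<Rightarrow> bool" where
  "amenable_e X d \<longleftrightarrow>
     (\<forall>R>0. \<forall>\<epsilon>>0. \<exists>F. F \<subseteq> X \<and> finite F \<and> F \<noteq> {} \<and>
        finite (boundary_e X d R F) \<and> real (card (boundary_e X d R F)) \<le> \<epsilon> * real (card F))"

end

theory Submission
  imports Defs
begin

definition nb :: "'a set \<Rightarrow> ('a \<Rightarrow> 'a \<Rightarrow> ereal) \<Rightarrow> 'a set \<Rightarrow> real \<Rightarrow> 'a set" where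
  "nb X d F r = {y\<in>X. \<exists>a\<in>F. d a y \<le> ereal r}"

lemma nb_UN: "F \<subseteq> X \<Longrightarrow> nb X d F r = (\<Union>a\<in>F. cball_e X d a r)"
  unfolding nb_def cball_e_def by auto

lemma ulf_finite: assumes "unif_locally_finite X d" "r>0" "x\<in>X" shows "finite (cball_e X d x r)"
  using assms unfolding unif_locally_finite_def by blast

lemma nb_finite: "unif_locally_finite X d \<Longrightarrow> r>0 \<Longrightarrow> F \<subseteq> X \<Longrightarrow> finite F \<Longrightarrow> finite (nb X d F r)"
  by (subst nb_UN, assumption, rule finite_UN_I, auto intro: ulf_finite)

lemma sub_nb: assumes "ext_metric X d" "F \<subseteq> X" "r \<ge> 0" shows "F \<subseteq> nb X d F r"
proof
  fix x assume x: "x \<in> F"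
  hence xX: "x \<in> X" using assms(2) by blast
  hence "d x x = 0" using assms(1) unfolding ext_metric_def by blast
  hence "d x x \<le> ereal r" using assms(3) by simp
  thus "x \<in> nb X d F r" unfolding nb_def using x xX by blast
qed

lemma card_UN_bound: assumes "finite A" "\<forall>a\<in>A. finite (B a) \<and> card (B a) \<le> N"
  shows "card (\<Union>a\<in>A. B a) \<le> card A * N"
proof -
  have "card (\<Union>a\<in>A. B a) \<le> (\<Sum>a\<in>A. card (B a))" by (rule card_UN_le[OF assms(1)])
  also have "\<dots> \<le> (\<Sum>a\<in>A. N)" using assms(2) by (intro sum_mono) auto
  finally show ?thesis by simp
qed

lemma expand:
  assumes em: "ext_metric X d" and ulf: "unif_locally_finite X d" and T: "T>0"
    and nonam: "\<forall>F. F \<subseteq> X \<and> finite F \<and> F \<noteq> {} \<longrightarrow> \<not>(finite (boundary_e X d T F) \<and> real (card (boundary_e X d T F)) \<le> \<epsilon> * real (card F))"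
    and N: "\<forall>x\<in>X. finite (cball_e X d x (2*T)) \<and> card (cball_e X d x (2*T)) \<le> N"
    and F: "F \<subseteq> X" "finite F" "F \<noteq> {}"
  shows "\<epsilon> * real (card F) < (real N + 1) * real (card (nb X d F (2*T) - F))"
proof -
  define D where "D = nb X d F (2*T) - F"
  have finD: "finite D" unfolding D_def using nb_finite[OF ulf _ F(1,2), of "2*T"] T by auto
  have sub: "boundary_e X d T F \<subseteq> D \<union> (\<Union>a\<in>D. cball_e X d a (2*T))"
  proof
    fix x assume x: "x \<in> boundary_e X d T F"
    hence xX: "x\<in>X" and h1: "setdist_e d x F \<le> ereal T" and h2: "setdist_e d x (X-F) \<le> ereal T"
      unfolding boundary_e_def by auto
    have lt: "ereal T < ereal (2*T)" using T by simp
    show "x \<in> D \<union> (\<Union>a\<in>D. cball_e X d a (2*T))"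
    proof (cases "x\<in>F")
      case False
      from h1 lt have "(INF a\<in>F. d x a) < ereal (2*T)" unfolding setdist_e_def by (rule le_less_trans)
      then obtain a where a: "a\<in>F" "d x a < ereal (2*T)" by (auto simp: INF_less_iff)
      moreover have "d a x = d x a" using em F(1) a(1) xX unfolding ext_metric_def by blast
      ultimately have "x \<in> D" using False xX unfolding D_def nb_def by force
      thus ?thesis by blast
    next
      case True
      from h2 lt have "(INF a\<in>X-F. d x a) < ereal (2*T)" unfolding setdist_e_def by (rule le_less_trans)
      then obtain a where a: "a\<in>X-F" "d x a < ereal (2*T)" by (auto simp: INF_less_iff)
      have "a\<in>D" using a True unfolding D_def nb_def by force
      have "d a x = d x a" using em a(1) xX unfolding ext_metric_def by blast
      hence "x \<in> cball_e X d a (2*T)" using a xX unfolding cball_e_def by auto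
      thus ?thesis using \<open>a\<in>D\<close> by blast
    qed
  qed
  have DX: "D \<subseteq> X" unfolding D_def nb_def by auto
  have finU: "finite (\<Union>a\<in>D. cball_e X d a (2*T))" using finD DX N by auto
  have finB: "finite (boundary_e X d T F)" using sub finD finU finite_subset by blast
  have u: "card (\<Union>a\<in>D. cball_e X d a (2*T)) \<le> card D * N"
  proof (rule card_UN_bound[OF finD])
    show "\<forall>a\<in>D. finite (cball_e X d a (2 * T)) \<and> card (cball_e X d a (2 * T)) \<le> N"
      using N DX by blast
  qed
  have "card (boundary_e X d T F) \<le> card (D \<union> (\<Union>a\<in>D. cball_e X d a (2*T)))"
    by (rule card_mono) (use finD finU sub in auto)
  also have "\<dots> \<le> card D + card (\<Union>a\<in>D. cball_e X d a (2*T))" by (rule card_Un_le)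
  finally have c1: "card (boundary_e X d T F) \<le> card D + card D * N" using u by linarith
  hence "real (card (boundary_e X d T F)) \<le> real (card D + card D * N)" by (simp only: of_nat_le_iff)
  also have "\<dots> = (real N + 1) * real (card D)" by (simp add: algebra_simps)
  finally have c2: "real (card (boundary_e X d T F)) \<le> (real N + 1) * real (card D)" .
  have "\<not> real (card (boundary_e X d T F)) \<le> \<epsilon> * real (card F)" using nonam F finB by blast
  thus ?thesis using c2 unfolding D_def by linarith
qed

lemma sep_exists:
  assumes "finite G" "\<forall>x\<in>G. \<forall>y\<in>G. d x y = d y x" "\<forall>x\<in>G. d x x = 0" "r \<ge> 0"
  shows "\<exists>Y\<subseteq>G. (\<forall>y1\<in>Y. \<forall>y2\<in>Y. y1\<noteq>y2 \<longrightarrow> d y1 y2 > ereal r) \<and> (\<forall>g\<in>G. \<exists>y\<in>Y. d y g \<le> ereal r)"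
  using assms(1,2,3)
proof (induction G rule: finite_induct)
  case empty
  then show ?case by auto
next
  case (insert g G)
  then obtain Y where Y: "Y \<subseteq> G" "\<forall>y1\<in>Y. \<forall>y2\<in>Y. y1\<noteq>y2 \<longrightarrow> d y1 y2 > ereal r"
     "\<forall>g\<in>G. \<exists>y\<in>Y. d y g \<le> ereal r" by auto
  show ?case
  proof (cases "\<exists>y\<in>Y. d y g \<le> ereal r")
    case True
    then show ?thesis using Y by (intro exI[of _ Y]) auto
  next
    case False
    have "\<forall>y\<in>Y. d g y > ereal r"
    proof
      fix y assume y: "y \<in> Y"
      hence "d y g > ereal r" using False by (auto simp: not_le)
      moreover have "d g y = d y g" using insert.prems(1) y Y(1) by blast
      ultimately show "d g y > ereal r" by simp
    qed
    moreover have "d g g \<le> ereal r" using insert.prems(2) assms(4) by simp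
    ultimately show ?thesis using Y False
      by (intro exI[of _ "insert g Y"]) (auto simp: not_le)
  qed
qed

theorem proposition3p7:
  fixes X :: "'a set" and d :: "'a \<Rightarrow> 'a \<Rightarrow> ereal"
  assumes "ext_metric X d"
    and "unif_locally_finite X d"
    and "\<not> amenable_e X d"
  shows "\<forall>(n::nat) (R::real). R > 0 \<longrightarrow> (\<exists>S::real. S > 0 \<and>
           (\<forall>M. M \<subseteq> X \<and> finite M \<longrightarrow>
              (\<exists>x :: nat \<Rightarrow> 'a.
                 (\<forall>i < n * card M. x i \<in> X) \<and>
                 (\<forall>i < n * card M. \<forall>j < n * card M. i \<noteq> j \<longrightarrow>
                     cball_e X d (x i) R \<inter> cball_e X d (x j) R = {}) \<and>
                 (\<forall>i < n * card M. cball_e X d (x i) R \<subseteq> cball_set X d M S))))"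
proof (intro allI impI)
  fix n :: nat and R :: real assume R: "R > 0"
  note em = assms(1) and ulf = assms(2)
  have sym: "\<And>x y. x\<in>X \<Longrightarrow> y\<in>X \<Longrightarrow> d x y = d y x" using em unfolding ext_metric_def by blast
  have refl: "\<And>x. x\<in>X \<Longrightarrow> d x x = 0" using em unfolding ext_metric_def by blast
  have tri: "\<And>x y z. x\<in>X \<Longrightarrow> y\<in>X \<Longrightarrow> z\<in>X \<Longrightarrow> d x z \<le> d x y + d y z"
    using em unfolding ext_metric_def by blast
  from assms(3) obtain T \<epsilon> where T: "T>0" and eps: "\<epsilon>>0" and nonam:
    "\<forall>F. F \<subseteq> X \<and> finite F \<and> F \<noteq> {} \<longrightarrow> \<not>(finite (boundary_e X d T F) \<and> real (card (boundary_e X d T F)) \<le> \<epsilon> * real (card F))"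
    unfolding amenable_e_def by blast
  have T2: "2*T > 0" using T by simp
  from ulf T2 obtain N1 :: nat where N1: "\<forall>x\<in>X. finite (cball_e X d x (2*T)) \<and> card (cball_e X d x (2*T)) \<le> N1"
    unfolding unif_locally_finite_def by blast
  have R2: "2*R > 0" using R by simp
  from ulf R2 obtain N2 :: nat where N2: "\<forall>x\<in>X. finite (cball_e X d x (2*R)) \<and> card (cball_e X d x (2*R)) \<le> N2"
    unfolding unif_locally_finite_def by blast
  define \<rho> where "\<rho> = 2*T"
  have rho: "\<rho> > 0" using T unfolding \<rho>_def by simp
  define c where "c = 1 + \<epsilon> / (real N1 + 1)"
  have c1: "c > 1" unfolding c_def using eps by simp
  have growth: "c * real (card F) \<le> real (card (nb X d F \<rho>))" if F: "F \<subseteq> X" "finite F" for F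
  proof (cases "F = {}")
    case True then show ?thesis by simp
  next
    case False
    have e: "\<epsilon> * real (card F) < (real N1 + 1) * real (card (nb X d F \<rho> - F))"
      using expand[OF em ulf T nonam N1 F False] unfolding \<rho>_def .
    have fin: "finite (nb X d F \<rho>)" using nb_finite[OF ulf rho F] .
    have sub: "F \<subseteq> nb X d F \<rho>" using sub_nb[OF em F(1)] rho by simp
    have cd: "card (nb X d F \<rho> - F) = card (nb X d F \<rho>) - card F" using card_Diff_subset[OF F(2) sub] .
    have "card F \<le> card (nb X d F \<rho>)" using card_mono[OF fin sub] .
    hence cd': "real (card (nb X d F \<rho> - F)) = real (card (nb X d F \<rho>)) - real (card F)" using cd by simp
    have "\<epsilon> / (real N1 + 1) * real (card F) \<le> real (card (nb X d F \<rho> - F))"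
      using e by (simp add: field_simps)
    thus ?thesis unfolding c_def using cd' by (simp add: algebra_simps)
  qed
  define N2' where "N2' = max N2 1"
  have N2'pos: "real N2' > 0" unfolding N2'_def by simp
  obtain k where k: "real n * real N2' < c ^ k" using real_arch_pow[OF c1] by blast
  define S where "S = real k * \<rho> + R"
  have Spos: "S > 0" unfolding S_def using R rho by (intro add_nonneg_pos) auto
  show "\<exists>S::real. S > 0 \<and>
           (\<forall>M. M \<subseteq> X \<and> finite M \<longrightarrow>
              (\<exists>x :: nat \<Rightarrow> 'a.
                 (\<forall>i < n * card M. x i \<in> X) \<and>
                 (\<forall>i < n * card M. \<forall>j < n * card M. i \<noteq> j \<longrightarrow>
                     cball_e X d (x i) R \<inter> cball_e X d (x j) R = {}) \<and>
                 (\<forall>i < n * card M. cball_e X d (x i) R \<subseteq> cball_set X d M S)))"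
  proof (rule exI[of _ S], intro conjI Spos allI impI)
    fix M assume M: "M \<subseteq> X \<and> finite M"
    define G where "G = (\<lambda>j. ((\<lambda>A. nb X d A \<rho>) ^^ j) M)"
    have P: "G j \<subseteq> X \<and> finite (G j) \<and> c^j * real (card M) \<le> real (card (G j))
             \<and> (\<forall>y\<in>G j. \<exists>a\<in>M. d a y \<le> ereal (real j * \<rho>))" for j
    proof (induction j)
      case 0
      have "\<forall>y\<in>G 0. \<exists>a\<in>M. d a y \<le> ereal (real 0 * \<rho>)"
      proof
        fix y assume "y \<in> G 0"
        hence y: "y \<in> M" by (simp add: G_def)
        hence "d y y = 0" using M refl by blast
        thus "\<exists>a\<in>M. d a y \<le> ereal (real 0 * \<rho>)" using y by (intro bexI[of _ y]) auto
      qed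
      then show ?case using M by (simp add: G_def)
    next
      case (Suc j)
      have GS: "G (Suc j) = nb X d (G j) \<rho>" by (simp add: G_def)
      have fin: "finite (G (Suc j))" using GS nb_finite[OF ulf rho] Suc by auto
      have "c ^ Suc j * real (card M) = c * (c^j * real (card M))" by simp
      also have "\<dots> \<le> c * real (card (G j))" using Suc c1 by (intro mult_left_mono) auto
      also have "\<dots> \<le> real (card (G (Suc j)))" using GS growth Suc by auto
      finally have cg: "c ^ Suc j * real (card M) \<le> real (card (G (Suc j)))" .
      have dist: "\<forall>y\<in>G (Suc j). \<exists>a\<in>M. d a y \<le> ereal (real (Suc j) * \<rho>)"
      proof
        fix y assume "y \<in> G (Suc j)"
        then obtain b where yX: "y\<in>X" and b: "b \<in> G j" "d b y \<le> ereal \<rho>" unfolding GS nb_def by auto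
        then obtain a where a: "a\<in>M" "d a b \<le> ereal (real j * \<rho>)" using Suc by auto
        have "d a y \<le> d a b + d b y" using tri a M b Suc yX by blast
        also have "\<dots> \<le> ereal (real j * \<rho>) + ereal \<rho>" using a b by (intro add_mono) auto
        also have "\<dots> = ereal (real (Suc j) * \<rho>)" by (simp add: algebra_simps)
        finally show "\<exists>a\<in>M. d a y \<le> ereal (real (Suc j) * \<rho>)" using a by blast
      qed
      show ?case using fin cg dist GS by (auto simp: nb_def)
    qed
    from P[of k] have GX: "G k \<subseteq> X" and Gfin: "finite (G k)" and Gc: "c^k * real (card M) \<le> real (card (G k))"
      and Gd: "\<forall>y\<in>G k. \<exists>a\<in>M. d a y \<le> ereal (real k * \<rho>)" by auto
    obtain Y where Y: "Y \<subseteq> G k" "\<forall>y1\<in>Y. \<forall>y2\<in>Y. y1\<noteq>y2 \<longrightarrow> d y1 y2 > ereal (2*R)"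
      "\<forall>g\<in>G k. \<exists>y\<in>Y. d y g \<le> ereal (2*R)"
      using sep_exists[OF Gfin, of d "2*R"] GX sym refl R by (auto simp: subset_iff)
    have Yfin: "finite Y" using Y(1) Gfin finite_subset by blast
    have YX: "Y \<subseteq> X" using Y(1) GX by blast
    have "G k \<subseteq> (\<Union>y\<in>Y. cball_e X d y (2*R))" using Y(3) GX unfolding cball_e_def by blast
    hence "card (G k) \<le> card (\<Union>y\<in>Y. cball_e X d y (2*R))"
      by (intro card_mono) (use Yfin YX N2 in auto)
    also have "\<dots> \<le> card Y * N2'"
    proof (rule card_UN_bound[OF Yfin])
      show "\<forall>a\<in>Y. finite (cball_e X d a (2 * R)) \<and> card (cball_e X d a (2 * R)) \<le> N2'"
        using N2 YX unfolding N2'_def by fastforce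
    qed
    finally have cGY: "real (card (G k)) \<le> real (card Y) * real N2'" by (simp only: of_nat_mult[symmetric] of_nat_le_iff)
    have "real n * real N2' * real (card M) \<le> c^k * real (card M)" using k by (intro mult_right_mono) auto
    hence "real n * real (card M) * real N2' \<le> real (card Y) * real N2'" using Gc cGY by (simp add: algebra_simps)
    hence "real n * real (card M) \<le> real (card Y)" using N2'pos by simp
    hence nY: "n * card M \<le> card Y" by (simp only: of_nat_mult[symmetric] of_nat_le_iff)
    obtain h where h: "bij_betw h {0..<card Y} Y" using ex_bij_betw_nat_finite[OF Yfin] by blast
    have hY: "\<And>i. i < n * card M \<Longrightarrow> h i \<in> Y" using h nY unfolding bij_betw_def by auto
    show "\<exists>x :: nat \<Rightarrow> 'a.
                 (\<forall>i < n * card M. x i \<in> X) \<and>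
                 (\<forall>i < n * card M. \<forall>j < n * card M. i \<noteq> j \<longrightarrow>
                     cball_e X d (x i) R \<inter> cball_e X d (x j) R = {}) \<and>
                 (\<forall>i < n * card M. cball_e X d (x i) R \<subseteq> cball_set X d M S)"
    proof (intro exI[of _ h] conjI allI impI)
      fix i assume i: "i < n * card M"
      show "h i \<in> X" using hY[OF i] YX by blast
    next
      fix i j assume i: "i < n * card M" and j: "j < n * card M" and ij: "i \<noteq> j"
      have "h i \<noteq> h j" using h ij i j nY unfolding bij_betw_def inj_on_def by auto
      hence gt: "d (h i) (h j) > ereal (2*R)" using Y(2) hY i j by blast
      show "cball_e X d (h i) R \<inter> cball_e X d (h j) R = {}"
      proof (rule ccontr)
        assume "cball_e X d (h i) R \<inter> cball_e X d (h j) R \<noteq> {}"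
        then obtain z where z: "z\<in>X" "d (h i) z \<le> ereal R" "d (h j) z \<le> ereal R" unfolding cball_e_def by auto
        have hiX: "h i \<in> X" "h j \<in> X" using hY i j YX by auto
        have "d (h i) (h j) \<le> d (h i) z + d z (h j)" using tri hiX z by blast
        also have "\<dots> = d (h i) z + d (h j) z" using sym hiX z by simp
        also have "\<dots> \<le> ereal R + ereal R" using z by (intro add_mono) auto
        also have "\<dots> = ereal (2*R)" by simp
        finally show False using gt by simp
      qed
    next
      fix i assume i: "i < n * card M"
      have hi: "h i \<in> X" "h i \<in> G k" using hY[OF i] YX Y(1) by auto
      then obtain a where a: "a\<in>M" "d a (h i) \<le> ereal (real k * \<rho>)" using Gd by blast
      have aX: "a \<in> X" using a M by blast
      show "cball_e X d (h i) R \<subseteq> cball_set X d M S"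
      proof
        fix z assume "z \<in> cball_e X d (h i) R"
        hence z: "z\<in>X" "d (h i) z \<le> ereal R" unfolding cball_e_def by auto
        have "setdist_e d z M \<le> d z a" unfolding setdist_e_def using a(1) by (rule INF_lower)
        also have "\<dots> \<le> d z (h i) + d (h i) a" using tri z hi aX by blast
        also have "\<dots> = d (h i) z + d a (h i)" using sym z hi aX by simp
        also have "\<dots> \<le> ereal R + ereal (real k * \<rho>)" using z a by (intro add_mono) auto
        also have "\<dots> = ereal S" unfolding S_def by simp
        finally show "z \<in> cball_set X d M S" using z unfolding cball_set_def by simp
      qed
    qed
  qed
qed

end
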